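(* Let $X=(\mathbb{R}^n,\|\cdot\|)$ be an $n$-dimensional real CL-space with an absolute norm. Then an element $(|a_1|,\dots,|a_n|)\in S_X$ is a point of upper monotonicity of $X$ if and only if $(|a_1|,\dots,|a_n|)$ is a convex combination of extreme points of $B_X$ all of whose coordinates are nonnegative real numbers.
   Context: A norm on $\mathbb{R}^n$ is absolute if $\|(a_1,\dots,a_n)\|=\|(|a_1|,\dots,|a_n|)\|$ for all scalars and $\|e_j\|=1$ for the canonical basis vectors; $X$ is regarded as a Banach lattice with the coordinatewise order. A Banach space is a CL-space if its unit ball is the absolutely convex hull of every maximal convex subset of its unit sphere; in finite dimensions, equivalently, $|x^*(x)|=1$ for every extreme point $x^*$ of $B_{X^*}$ and every extreme point $x$ of $B_X$. A point $x\in S_X$ with $x\ge0$ is a point of upper monotonicity of $X$ if $\|x+y\|>\|x\|$ for every $y\ge0$ with $y\ne0$. *)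

theory Defs
  imports "HOL-Analysis.Analysis"
begin

definition is_norm_fun :: "(real^'n \<Rightarrow> real) \<Rightarrow> bool" where
  "is_norm_fun N \<longleftrightarrow>
     (\<forall>x. N x = 0 \<longleftrightarrow> x = 0) \<and>
     (\<forall>c x. N (c *\<^sub>R x) = \<bar>c\<bar> * N x) \<and>
     (\<forall>x y. N (x + y) \<le> N x + N y)"

definition absolute_norm :: "(real^'n \<Rightarrow> real) \<Rightarrow> bool" where
  "absolute_norm N \<longleftrightarrow> is_norm_fun N \<and>
     (\<forall>x. N x = N (\<chi> i. \<bar>x $ i\<bar>)) \<and>
     (\<forall>j. N (axis j 1) = 1)"

definition unit_ball :: "(real^'n \<Rightarrow> real) \<Rightarrow> (real^'n) set" where
  "unit_ball N = {x. N x \<le> 1}"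

definition unit_sphere :: "(real^'n \<Rightarrow> real) \<Rightarrow> (real^'n) set" where
  "unit_sphere N = {x. N x = 1}"

definition maximal_convex_subset :: "(real^'n) set \<Rightarrow> (real^'n) set \<Rightarrow> bool" where
  "maximal_convex_subset F S \<longleftrightarrow> F \<subseteq> S \<and> convex F \<and>
     (\<forall>G. G \<subseteq> S \<and> convex G \<and> F \<subseteq> G \<longrightarrow> G = F)"

text \<open>Absolutely convex hull: all combinations sum(lambda_i x_i) with x_i in F and sum |lambda_i| \<le> 1.\<close>
definition abs_convex_hull :: "(real^'n) set \<Rightarrow> (real^'n) set" where
  "abs_convex_hull F = convex hull (F \<union> uminus ` F \<union> {0})"

text \<open>CL-space: the unit ball is the absolutely convex hull of every maximal convex subset
  of the unit sphere (finite-dimensional, so no closure is needed).\<close>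
definition CL_space :: "(real^'n \<Rightarrow> real) \<Rightarrow> bool" where
  "CL_space N \<longleftrightarrow> (\<forall>F. maximal_convex_subset F (unit_sphere N) \<longrightarrow>
       unit_ball N = abs_convex_hull F)"

definition nonneg_vec :: "real^'n \<Rightarrow> bool" where
  "nonneg_vec x \<longleftrightarrow> (\<forall>i. 0 \<le> x $ i)"

definition upper_monotonicity_point :: "(real^'n \<Rightarrow> real) \<Rightarrow> real^'n \<Rightarrow> bool" where
  "upper_monotonicity_point N x \<longleftrightarrow> x \<in> unit_sphere N \<and> nonneg_vec x \<and>
     (\<forall>y. nonneg_vec y \<and> y \<noteq> 0 \<longrightarrow> N (x + y) > N x)"

end

theory Submission
  imports Defs "HOL-Analysis.Analysis"
begin


lemma nf_zero: "is_norm_fun N \<Longrightarrow> N 0 = 0"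
  unfolding is_norm_fun_def by auto

lemma nf_scale: "is_norm_fun N \<Longrightarrow> N (c *\<^sub>R x) = \<bar>c\<bar> * N x"
  unfolding is_norm_fun_def by auto

lemma nf_tri: "is_norm_fun N \<Longrightarrow> N (x + y) \<le> N x + N y"
  unfolding is_norm_fun_def by auto

lemma nf_neg: "is_norm_fun N \<Longrightarrow> N (- x) = N x"
  using nf_scale[of N "-1" x] by simp

lemma nf_nonneg: "is_norm_fun N \<Longrightarrow> N x \<ge> 0"
  using nf_tri[of N x "-x"] nf_neg[of N x] nf_zero[of N] by simp

lemma nf_diff: "is_norm_fun N \<Longrightarrow> N x - N y \<le> N (x - y)"
  using nf_tri[of N "x - y" y] by simp

lemma nf_sum: assumes "is_norm_fun N" shows "N (sum f A) \<le> (\<Sum>a\<in>A. N (f a))"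
proof (induction A rule: infinite_finite_induct)
  case (infinite A) then show ?case using nf_zero[OF assms] by simp
next
  case empty then show ?case using nf_zero[OF assms] by simp
next
  case (insert x F)
  then show ?case using nf_tri[OF assms, of "f x" "sum f F"] by simp
qed

lemma an_nf: "absolute_norm N \<Longrightarrow> is_norm_fun N"
  unfolding absolute_norm_def by auto

lemma an_abs: "absolute_norm N \<Longrightarrow> N x = N (\<chi> i. \<bar>x $ i\<bar>)"
  unfolding absolute_norm_def by auto

lemma an_axis: "absolute_norm N \<Longrightarrow> N (axis j 1) = 1"
  unfolding absolute_norm_def by auto

lemma an_abs_eq: "absolute_norm N \<Longrightarrow> (\<And>i. \<bar>x $ i\<bar> = \<bar>y $ i\<bar>) \<Longrightarrow> N x = N y"
  using an_abs[of N x] an_abs[of N y] by simp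

definition sflip :: "real^'n \<Rightarrow> real^'n \<Rightarrow> real^'n" where
  "sflip s z = (\<chi> j. s $ j * z $ j)"

lemma sflip_nth[simp]: "sflip s z $ j = s $ j * z $ j"
  unfolding sflip_def by simp

lemma an_sflip: "absolute_norm N \<Longrightarrow> (\<forall>j. \<bar>s $ j\<bar> = 1) \<Longrightarrow> N (sflip s z) = N z"
  by (rule an_abs_eq) (auto simp: abs_mult)

lemma sflip_invol: "(\<forall>j. \<bar>s $ j\<bar> = 1) \<Longrightarrow> sflip s (sflip s z) = z"
proof -
  assume h: "\<forall>j. \<bar>s $ j\<bar> = 1"
  have "s $ j * (s $ j * z $ j) = z $ j" for j
  proof -
    have "s $ j = 1 \<or> s $ j = -1" using h[rule_format, of j] by (cases "s $ j \<ge> 0") auto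
    then show ?thesis by auto
  qed
  then show ?thesis by (simp add: vec_eq_iff)
qed

lemma linear_sflip: "linear (sflip s)"
proof (rule linearI)
  fix x y and c :: real
  show "sflip s (x + y) = sflip s x + sflip s y" by (simp add: vec_eq_iff distrib_left)
  show "sflip s (c *\<^sub>R x) = c *\<^sub>R sflip s x" by (simp add: vec_eq_iff)
qed

lemma sum_axis_expand: "(\<Sum>i\<in>UNIV. (x $ i) *\<^sub>R axis i (1::real)) = x"
  by (simp add: vec_eq_iff sum_component axis_def if_distrib cong: if_cong)

lemma N_le_l1: assumes "absolute_norm N" shows "N x \<le> (\<Sum>i\<in>UNIV. \<bar>x $ i\<bar>)"
proof -
  have "N x = N (\<Sum>i\<in>UNIV. (x $ i) *\<^sub>R axis i (1::real))" by (simp add: sum_axis_expand)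
  also have "\<dots> \<le> (\<Sum>i\<in>UNIV. N ((x $ i) *\<^sub>R axis i (1::real)))"
    by (rule nf_sum[OF an_nf[OF assms]])
  also have "\<dots> = (\<Sum>i\<in>UNIV. \<bar>x $ i\<bar>)"
    using nf_scale[OF an_nf[OF assms]] an_axis[OF assms] by simp
  finally show ?thesis .
qed

lemma N_lip: assumes "absolute_norm N" shows "\<bar>N x - N y\<bar> \<le> real CARD('n) * norm (x - y :: real^'n)"
proof -
  have bnd: "N z \<le> real CARD('n) * norm z" for z :: "real^'n"
  proof -
    have "N z \<le> (\<Sum>i\<in>UNIV. \<bar>z $ i\<bar>)" by (rule N_le_l1[OF assms])
    also have "\<dots> \<le> (\<Sum>i\<in>(UNIV::'n set). norm z)"
      by (rule sum_mono) (rule component_le_norm_cart)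
    finally show ?thesis by simp
  qed
  have d1: "N x - N y \<le> N (x - y)" by (rule nf_diff[OF an_nf[OF assms]])
  have d2: "N y - N x \<le> N (y - x)" by (rule nf_diff[OF an_nf[OF assms]])
  have e1: "N (y - x) = N (x - y)" using nf_neg[OF an_nf[OF assms], of "x - y"] by simp
  have b1: "N (x - y) \<le> real CARD('n) * norm (x - y)" by (rule bnd)
  show ?thesis unfolding abs_le_iff using d1 d2 e1 b1 by linarith
qed

lemma N_cont: assumes "absolute_norm N" shows "continuous_on UNIV (N :: real^'n \<Rightarrow> real)"
  unfolding continuous_on_iff
proof (intro ballI allI impI)
  fix x :: "real^'n" and e :: real assume e: "e > 0"
  define C where "C = real CARD('n) + 1"
  have C: "C > 0" unfolding C_def by simp
  show "\<exists>d>0. \<forall>x'\<in>UNIV. dist x' x < d \<longrightarrow> dist (N x') (N x) < e"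
  proof (intro exI[of _ "e / C"] conjI ballI impI)
    show "e / C > 0" using e C by simp
    fix x' assume "dist x' x < e / C"
    then have "C * norm (x' - x) < e" using C by (simp add: dist_norm field_simps)
    moreover have "\<bar>N x' - N x\<bar> \<le> real CARD('n) * norm (x' - x)" by (rule N_lip[OF assms])
    moreover have "real CARD('n) * norm (x' - x) \<le> C * norm (x' - x)" unfolding C_def
      by (simp add: mult_right_mono)
    ultimately show "dist (N x') (N x) < e" by (simp add: dist_real_def)
  qed
qed

lemma N_pos: assumes "absolute_norm N" "x \<noteq> 0" shows "N x > 0"
  using nf_nonneg[OF an_nf[OF assms(1)], of x] assms(2) an_nf[OF assms(1)]
  unfolding is_norm_fun_def by force

lemma N_lower: assumes "absolute_norm N" shows "\<exists>m>0. \<forall>z::real^'n. m * norm z \<le> N z"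
proof -
  have cmp: "compact (sphere (0::real^'n) 1)" by simp
  have ne: "sphere (0::real^'n) 1 \<noteq> {}"
  proof -
    have "axis undefined 1 \<in> sphere (0::real^'n) 1" by simp
    then show ?thesis by blast
  qed
  obtain z0 where z0: "z0 \<in> sphere 0 1" and mn: "\<forall>z\<in>sphere 0 1. N z0 \<le> N z"
    using continuous_attains_inf[OF cmp ne continuous_on_subset[OF N_cont[OF assms]]] by blast
  have "z0 \<noteq> 0" using z0 by auto
  then have m: "N z0 > 0" by (rule N_pos[OF assms])
  show ?thesis
  proof (intro exI[of _ "N z0"] conjI allI)
    show "N z0 > 0" by (rule m)
    fix z :: "real^'n"
    show "N z0 * norm z \<le> N z"
    proof (cases "z = 0")
      case True then show ?thesis using nf_zero[OF an_nf[OF assms]] by simp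
    next
      case False
      then have "(1 / norm z) *\<^sub>R z \<in> sphere 0 1" by simp
      then have "N z0 \<le> N ((1 / norm z) *\<^sub>R z)" using mn by blast
      also have "\<dots> = N z / norm z" using nf_scale[OF an_nf[OF assms]] by simp
      finally show ?thesis using False by (simp add: field_simps)
    qed
  qed
qed

lemma ball_compact: assumes "absolute_norm N" shows "compact (unit_ball (N :: real^'n \<Rightarrow> real))"
proof -
  obtain m where m: "m > 0" "\<forall>z::real^'n. m * norm z \<le> N z" using N_lower[OF assms] by blast
  have "closed (unit_ball N)" unfolding unit_ball_def
    by (rule closed_Collect_le) (auto intro: N_cont[OF assms])
  moreover have "bounded (unit_ball N)" unfolding bounded_iff unit_ball_def
  proof (intro exI[of _ "1/m"] ballI)
    fix z assume "z \<in> {x. N x \<le> 1}"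
    then have "m * norm z \<le> 1" using m(2)[rule_format, of z] by simp
    then show "norm z \<le> 1 / m" using m(1) by (simp add: field_simps)
  qed
  ultimately show ?thesis by (simp add: compact_eq_bounded_closed)
qed

lemma ball_convex: assumes "absolute_norm N" shows "convex (unit_ball N)"
  unfolding convex_def unit_ball_def
proof (intro ballI allI impI, simp)
  fix x y :: "real^'a" and u v :: real
  assume h: "N x \<le> 1" "N y \<le> 1" "0 \<le> u" "0 \<le> v" "u + v = 1"
  have "N (u *\<^sub>R x + v *\<^sub>R y) \<le> N (u *\<^sub>R x) + N (v *\<^sub>R y)" by (rule nf_tri[OF an_nf[OF assms]])
  also have "\<dots> = u * N x + v * N y" using h nf_scale[OF an_nf[OF assms]] by simp
  also have "\<dots> \<le> u * 1 + v * 1" using h by (intro add_mono mult_left_mono) auto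
  finally show "N (u *\<^sub>R x + v *\<^sub>R y) \<le> 1" using h by simp
qed



lemma inj_sflip: "(\<forall>j. \<bar>s $ j\<bar> = 1) \<Longrightarrow> inj (sflip s)"
  by (metis injI sflip_invol)

lemma sflip_ball: assumes "absolute_norm N" "\<forall>j. \<bar>s $ j\<bar> = 1" shows "(sflip s z \<in> unit_ball N) = (z \<in> unit_ball N)"
  unfolding unit_ball_def using an_sflip[OF assms, of z] by auto

lemma sflip_sphere: assumes "absolute_norm N" "\<forall>j. \<bar>s $ j\<bar> = 1" shows "(sflip s z \<in> unit_sphere N) = (z \<in> unit_sphere N)"
  unfolding unit_sphere_def using an_sflip[OF assms, of z] by auto

lemma ext_sflip:
  assumes an: "absolute_norm N" and s: "\<forall>j. \<bar>s $ j\<bar> = 1"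
    and e: "e extreme_point_of unit_ball N"
  shows "sflip s e extreme_point_of unit_ball N"
  unfolding extreme_point_of_def
proof (intro conjI ballI)
  show "sflip s e \<in> unit_ball N" using e sflip_ball[OF an s] unfolding extreme_point_of_def by auto
  fix a b assume ab: "a \<in> unit_ball N" "b \<in> unit_ball N"
  show "sflip s e \<notin> open_segment a b"
  proof
    assume "sflip s e \<in> open_segment a b"
    then have "sflip s (sflip s e) \<in> sflip s ` open_segment a b" by blast
    then have "e \<in> open_segment (sflip s a) (sflip s b)"
      using open_segment_linear_image[OF linear_sflip inj_sflip[OF s]] sflip_invol[OF s] by simp
    moreover have "sflip s a \<in> unit_ball N" "sflip s b \<in> unit_ball N"
      using ab sflip_ball[OF an s] by auto
    ultimately show False using e unfolding extreme_point_of_def by blast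
  qed
qed

lemma axis_in_ball: assumes "absolute_norm N" shows "axis j 1 \<in> unit_ball N" "- axis j 1 \<in> unit_ball N"
  unfolding unit_ball_def using an_axis[OF assms, of j] nf_neg[OF an_nf[OF assms], of "axis j 1"] by auto

lemma zero_not_ext:
  assumes an: "absolute_norm N"
  shows "\<not> (0::real^'n) extreme_point_of unit_ball N"
proof
  assume h: "(0::real^'n) extreme_point_of unit_ball N"
  define u :: "real^'n" where "u = axis undefined 1"
  have "u \<noteq> - u"
  proof
    assume "u = - u"
    then have "u $ undefined = (- u) $ undefined" by (rule arg_cong)
    then show False unfolding u_def by (simp add: axis_def)
  qed
  then have "midpoint u (-u) \<in> open_segment u (-u)" by simp
  moreover have "midpoint u (-u) = 0" by (simp add: midpoint_def)
  ultimately show False using h axis_in_ball[OF an] unfolding extreme_point_of_def u_def by metis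
qed

lemma ext_UM:
  assumes an: "absolute_norm N" and e: "e extreme_point_of unit_ball N"
    and nn: "nonneg_vec e"
  shows "N (e + axis i 1) > 1"
proof (rule ccontr)
  assume "\<not> N (e + axis i 1) > 1"
  then have b: "e + axis i 1 \<in> unit_ball N" unfolding unit_ball_def by simp
  have eB: "e \<in> unit_ball N" using e unfolding extreme_point_of_def by auto
  have noseg: "\<And>a b. a \<in> unit_ball N \<Longrightarrow> b \<in> unit_ball N \<Longrightarrow> e \<notin> open_segment a b"
    using e unfolding extreme_point_of_def by auto
  show False
  proof (cases "e $ i = 0")
    case True
    have "N (e - axis i 1) = N (e + axis i 1)"
      by (rule an_abs_eq[OF an]) (auto simp: axis_def True)
    then have a: "e - axis i 1 \<in> unit_ball N" using b unfolding unit_ball_def by simp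
    have ne: "e - axis i 1 \<noteq> e + axis i 1"
    proof
      assume "e - axis i 1 = e + axis i 1"
      then have "(e - axis i 1) $ i = (e + axis i 1) $ i" by (rule arg_cong)
      then show False by (simp add: axis_def)
    qed
    then have "midpoint (e - axis i 1) (e + axis i 1) \<in> open_segment (e - axis i 1) (e + axis i 1)" by simp
    moreover have "midpoint (e - axis i 1) (e + axis i 1) = e"
      by (simp add: midpoint_def vec_eq_iff)
    ultimately show False using noseg[OF a b] by simp
  next
    case False
    then have pos: "e $ i > 0" using nn unfolding nonneg_vec_def by (metis less_eq_real_def)
    define s where "s = (\<chi> j. if j = i then -1 else (1::real))"
    have s: "\<forall>j. \<bar>s $ j\<bar> = 1" unfolding s_def by simp
    define z where "z = e - (e $ i) *\<^sub>R axis i 1"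
    have zm: "z = midpoint e (sflip s e)"
      unfolding z_def midpoint_def s_def by (simp add: vec_eq_iff axis_def)
    have "N z \<le> (1/2) * N e + (1/2) * N (sflip s e)"
      unfolding zm midpoint_def
      using nf_tri[OF an_nf[OF an], of "(1/2) *\<^sub>R e" "(1/2) *\<^sub>R sflip s e"]
        nf_scale[OF an_nf[OF an]] by (simp add: scaleR_add_right)
    then have "N z \<le> N e" using an_sflip[OF an s] by simp
    then have zB: "z \<in> unit_ball N" using eB unfolding unit_ball_def by simp
    define t where "t = e $ i / (1 + e $ i)"
    have t: "0 < t" "t < 1" unfolding t_def using pos by auto
    have ne: "z \<noteq> e + axis i 1"
    proof
      assume "z = e + axis i 1"
      then have "z $ i = (e + axis i 1) $ i" by simp
      then show False unfolding z_def using pos by (simp add: axis_def)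
    qed
    have "e = (1 - t) *\<^sub>R z + t *\<^sub>R (e + axis i 1)"
    proof -
      have "(1 - t) * e $ i = t" unfolding t_def using pos by (simp add: field_simps)
      then show ?thesis unfolding z_def
        by (simp add: vec_eq_iff axis_def algebra_simps)
    qed
    then have "e \<in> open_segment z (e + axis i 1)" unfolding in_segment using ne t by blast
    then show False using noseg[OF zB b] by simp
  qed
qed

lemma ext_in_F:
  assumes CL: "CL_space N" and F: "maximal_convex_subset F (unit_sphere N)"
    and e: "e extreme_point_of unit_ball N"
  shows "e \<in> F \<or> - e \<in> F \<or> e = 0"
proof -
  have "unit_ball N = abs_convex_hull F" using CL F unfolding CL_space_def by blast
  then have "e extreme_point_of convex hull (F \<union> uminus ` F \<union> {0})"
    using e unfolding abs_convex_hull_def by simp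
  then have "e \<in> F \<union> uminus ` F \<union> {0}" by (rule extreme_point_of_convex_hull)
  then show ?thesis by (auto simp: image_iff)
qed

lemma maximal_sflip:
  assumes an: "absolute_norm N" and s: "\<forall>j. \<bar>s $ j\<bar> = 1"
    and F: "maximal_convex_subset F (unit_sphere N)"
  shows "maximal_convex_subset (sflip s ` F) (unit_sphere N)"
  unfolding maximal_convex_subset_def
proof (intro conjI allI impI)
  have FS: "F \<subseteq> unit_sphere N" and cF: "convex F"
    and mx: "\<And>G. G \<subseteq> unit_sphere N \<Longrightarrow> convex G \<Longrightarrow> F \<subseteq> G \<Longrightarrow> G = F"
    using F unfolding maximal_convex_subset_def by auto
  show "sflip s ` F \<subseteq> unit_sphere N" using FS sflip_sphere[OF an s] by auto
  show "convex (sflip s ` F)" by (rule convex_linear_image[OF linear_sflip cF])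
  fix G assume G: "G \<subseteq> unit_sphere N \<and> convex G \<and> sflip s ` F \<subseteq> G"
  have "sflip s ` G \<subseteq> unit_sphere N" using G sflip_sphere[OF an s] by auto
  moreover have "convex (sflip s ` G)" using G by (intro convex_linear_image[OF linear_sflip]) auto
  moreover have "F \<subseteq> sflip s ` G"
  proof
    fix x assume "x \<in> F"
    then have "sflip s x \<in> G" using G by auto
    then show "x \<in> sflip s ` G" using sflip_invol[OF s] by (metis image_eqI)
  qed
  ultimately have "sflip s ` G = F" using mx by blast
  then have "sflip s ` sflip s ` G = sflip s ` F" by simp
  then show "G = sflip s ` F" using sflip_invol[OF s] by (simp add: image_image)
qed



lemma exists_maximal:
  assumes p: "p \<in> unit_sphere N"
  shows "\<exists>F. maximal_convex_subset F (unit_sphere N) \<and> p \<in> F"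
proof -
  define A where "A = {G. p \<in> G \<and> G \<subseteq> unit_sphere N \<and> convex G}"
  have "\<exists>M\<in>A. \<forall>X\<in>A. M \<subseteq> X \<longrightarrow> X = M"
  proof (rule subset_Zorn)
    fix C assume ch: "subset.chain A C"
    then have CA: "C \<subseteq> A" and lin: "\<forall>X\<in>C. \<forall>Y\<in>C. X \<subseteq> Y \<or> Y \<subseteq> X"
      unfolding subset_chain_def by auto
    show "\<exists>U\<in>A. \<forall>X\<in>C. X \<subseteq> U"
    proof (cases "C = {}")
      case True
      have "{p} \<in> A" unfolding A_def using p by auto
      then show ?thesis using True by blast
    next
      case False
      have "\<Union>C \<in> A" unfolding A_def
      proof (intro CollectI conjI)
        show "p \<in> \<Union>C" using False CA unfolding A_def by auto
        show "\<Union>C \<subseteq> unit_sphere N" using CA unfolding A_def by auto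
        show "convex (\<Union>C)" unfolding convex_def
        proof (intro ballI allI impI)
          fix x y u v assume x: "x \<in> \<Union>C" and y: "y \<in> \<Union>C" and uv: "0 \<le> (u::real)" "0 \<le> v" "u + v = 1"
          then obtain X Y where XY: "X \<in> C" "Y \<in> C" "x \<in> X" "y \<in> Y" by auto
          have "convex X" "convex Y" using XY CA unfolding A_def by auto
          show "u *\<^sub>R x + v *\<^sub>R y \<in> \<Union>C"
          proof (cases "X \<subseteq> Y")
            case True
            then have "u *\<^sub>R x + v *\<^sub>R y \<in> Y" using \<open>convex Y\<close> XY uv unfolding convex_def by blast
            then show ?thesis using XY by blast
          next
            case False
            then have "Y \<subseteq> X" using lin XY by blast
            then have "u *\<^sub>R x + v *\<^sub>R y \<in> X" using \<open>convex X\<close> XY uv unfolding convex_def by blast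
            then show ?thesis using XY by blast
          qed
        qed
      qed
      then show ?thesis by blast
    qed
  qed
  then obtain M where M: "M \<in> A" "\<forall>X\<in>A. M \<subseteq> X \<longrightarrow> X = M" by blast
  have "maximal_convex_subset M (unit_sphere N)"
    unfolding maximal_convex_subset_def
  proof (intro conjI allI impI)
    show "M \<subseteq> unit_sphere N" "convex M" using M(1) unfolding A_def by auto
    fix G assume "G \<subseteq> unit_sphere N \<and> convex G \<and> M \<subseteq> G"
    moreover then have "G \<in> A" using M(1) unfolding A_def by auto
    ultimately show "G = M" using M(2) by blast
  qed
  then show ?thesis using M(1) unfolding A_def by blast
qed

lemma separation:
  assumes an: "absolute_norm N" and cF: "convex F" and FS: "F \<subseteq> unit_sphere N" and Fne: "F \<noteq> {}"
  shows "\<exists>w. (\<forall>z. inner w z \<le> N z) \<and> (\<forall>z\<in>F. inner w z = 1)"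
proof -
  have nf: "is_norm_fun N" by (rule an_nf[OF an])
  define U where "U = {z. N z < 1}"
  have cU: "convex U" unfolding convex_def U_def
  proof (intro ballI allI impI, simp)
    fix x y :: "real^'a" and u v :: real
    assume h: "N x < 1" "N y < 1" "0 \<le> u" "0 \<le> v" "u + v = 1"
    have "N (u *\<^sub>R x + v *\<^sub>R y) \<le> N (u *\<^sub>R x) + N (v *\<^sub>R y)" by (rule nf_tri[OF nf])
    also have "\<dots> = u * N x + v * N y" using h nf_scale[OF nf] by simp
    also have "\<dots> < 1"
    proof (cases "u = 0")
      case True then show ?thesis using h by simp
    next
      case False
      then have "u * N x < u * 1" using h by simp
      moreover have "v * N y \<le> v * 1" using h by (intro mult_left_mono) auto
      ultimately show ?thesis using h by simp
    qed
    finally show "N (u *\<^sub>R x + v *\<^sub>R y) < 1" .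
  qed
  have U0: "0 \<in> U" unfolding U_def using nf_zero[OF nf] by simp
  have disj: "U \<inter> F = {}" using FS unfolding U_def unit_sphere_def by auto
  obtain a b where ab: "a \<noteq> 0" "\<forall>x\<in>U. inner a x \<le> b" "\<forall>x\<in>F. inner a x \<ge> b"
    using separating_hyperplane_sets[OF cU cF _ Fne disj] U0 by blast
  have bpos: "b > 0"
  proof -
    define t where "t = 1 / (2 * N a + 1)"
    have Na: "N a \<ge> 0" by (rule nf_nonneg[OF nf])
    have t: "t > 0" unfolding t_def using Na by simp
    have "N (t *\<^sub>R a) = t * N a" using nf_scale[OF nf] t by simp
    also have "\<dots> < 1" unfolding t_def using Na by (simp add: field_simps)
    finally have "t *\<^sub>R a \<in> U" unfolding U_def by simp
    then have "inner a (t *\<^sub>R a) \<le> b" using ab by blast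
    moreover have "inner a (t *\<^sub>R a) > 0" using t ab(1) by simp
    ultimately show ?thesis by simp
  qed
  define w where "w = (1 / b) *\<^sub>R a"
  have le: "inner w z \<le> N z" for z
  proof (rule ccontr)
    assume "\<not> inner w z \<le> N z"
    then have lt: "N z < inner w z" by simp
    define r where "r = (N z + inner w z) / 2"
    have r: "N z < r" "r < inner w z" using lt unfolding r_def by auto
    have rpos: "r > 0" using r nf_nonneg[OF nf, of z] by simp
    have "N ((1/r) *\<^sub>R z) = N z / r" using nf_scale[OF nf] rpos by simp
    also have "\<dots> < 1" using r rpos by simp
    finally have "(1/r) *\<^sub>R z \<in> U" unfolding U_def by simp
    then have "inner a ((1/r) *\<^sub>R z) \<le> b" using ab by blast
    then have "inner w z \<le> r" unfolding w_def using rpos bpos by (simp add: field_simps)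
    then show False using r by simp
  qed
  have eq: "inner w z = 1" if "z \<in> F" for z
  proof -
    have "inner a z \<ge> b" using ab that by blast
    then have "inner w z \<ge> 1" unfolding w_def using bpos by (simp add: field_simps)
    moreover have "N z = 1" using FS that unfolding unit_sphere_def by auto
    ultimately show ?thesis using le[of z] by simp
  qed
  show ?thesis using le eq by blast
qed



lemma dir_left:
  assumes an: "absolute_norm N" and UM: "upper_monotonicity_point N x"
  shows "x \<in> convex hull {e. e extreme_point_of (unit_ball N) \<and> nonneg_vec e}"
proof -
  define E where "E = {e. e extreme_point_of (unit_ball N) \<and> nonneg_vec e}"
  define K where "K = unit_ball N"
  have K: "K = convex hull {v. v extreme_point_of K}"
    unfolding K_def by (rule Krein_Milman_Minkowski[OF ball_compact[OF an] ball_convex[OF an]])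
  have xS: "N x = 1" and xnn: "nonneg_vec x"
    and um: "\<And>y. nonneg_vec y \<Longrightarrow> y \<noteq> 0 \<Longrightarrow> N (x + y) > N x"
    using UM unfolding upper_monotonicity_point_def unit_sphere_def by auto
  have xK: "x \<in> K" unfolding K_def unit_ball_def using xS by simp
  define P where "P = {z. \<exists>w\<in>convex hull E. \<forall>i. \<bar>z $ i\<bar> \<le> w $ i}"
  have extP: "{v. v extreme_point_of K} \<subseteq> P"
  proof
    fix v assume "v \<in> {v. v extreme_point_of K}"
    then have v: "v extreme_point_of unit_ball N" unfolding K_def by simp
    define s where "s = (\<chi> j. if v $ j \<ge> 0 then (1::real) else -1)"
    have s: "\<forall>j. \<bar>s $ j\<bar> = 1" unfolding s_def by simp
    have "sflip s v extreme_point_of unit_ball N" by (rule ext_sflip[OF an s v])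
    moreover have sv: "sflip s v = (\<chi> j. \<bar>v $ j\<bar>)" unfolding s_def by (simp add: vec_eq_iff)
    ultimately have "sflip s v \<in> E" unfolding E_def nonneg_vec_def by simp
    then have "sflip s v \<in> convex hull E" by (rule hull_inc)
    then show "v \<in> P" unfolding P_def using sv by force
  qed
  have cP: "convex P" unfolding convex_def
  proof (intro ballI allI impI)
    fix z1 z2 u v assume z: "z1 \<in> P" "z2 \<in> P" and uv: "0 \<le> (u::real)" "0 \<le> v" "u + v = 1"
    obtain w1 where w1: "w1 \<in> convex hull E" "\<forall>i. \<bar>z1 $ i\<bar> \<le> w1 $ i" using z(1) unfolding P_def by auto
    obtain w2 where w2: "w2 \<in> convex hull E" "\<forall>i. \<bar>z2 $ i\<bar> \<le> w2 $ i" using z(2) unfolding P_def by auto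
    have "u *\<^sub>R w1 + v *\<^sub>R w2 \<in> convex hull E"
      using convex_convex_hull[of E] w1(1) w2(1) uv unfolding convex_def by blast
    moreover have "\<bar>(u *\<^sub>R z1 + v *\<^sub>R z2) $ i\<bar> \<le> (u *\<^sub>R w1 + v *\<^sub>R w2) $ i" for i
    proof -
      have "\<bar>(u *\<^sub>R z1 + v *\<^sub>R z2) $ i\<bar> \<le> u * \<bar>z1 $ i\<bar> + v * \<bar>z2 $ i\<bar>"
        using uv by (simp add: abs_mult order_trans[OF abs_triangle_ineq])
      also have "\<dots> \<le> u * w1 $ i + v * w2 $ i"
        using uv w1(2) w2(2) by (intro add_mono mult_left_mono) auto
      finally show ?thesis by simp
    qed
    ultimately show "u *\<^sub>R z1 + v *\<^sub>R z2 \<in> P" unfolding P_def by blast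
  qed
  have H: "convex hull {v. v extreme_point_of K} \<subseteq> P" by (rule hull_minimal[of _ _ convex, OF extP cP])
  have "K \<subseteq> P"
  proof -
    have "K = convex hull {v. v extreme_point_of K}" by (rule K)
    also have "\<dots> \<subseteq> P" by (rule H)
    finally show ?thesis .
  qed
  then obtain w where w: "w \<in> convex hull E" "\<forall>i. \<bar>x $ i\<bar> \<le> w $ i" using xK unfolding P_def by auto
  have "E \<subseteq> K" unfolding E_def K_def extreme_point_of_def by auto
  then have "convex hull E \<subseteq> K" using ball_convex[OF an] unfolding K_def by (rule hull_minimal)
  then have wK: "N w \<le> 1" using w(1) unfolding K_def unit_ball_def by auto
  define y where "y = w - x"
  have ynn: "nonneg_vec y" unfolding y_def nonneg_vec_def using w(2) xnn unfolding nonneg_vec_def by force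
  have "y = 0"
  proof (rule ccontr)
    assume "y \<noteq> 0"
    then have "N (x + y) > N x" using um ynn by blast
    then show False using wK xS unfolding y_def by simp
  qed
  then have "x = w" unfolding y_def by simp
  then show ?thesis using w(1) unfolding E_def by simp
qed

lemma dir_right:
  fixes x :: "real^'n"
  assumes an: "absolute_norm N" and CL: "CL_space N"
    and xS: "x \<in> unit_sphere N" and xnn: "nonneg_vec x"
    and xh: "x \<in> convex hull {e. e extreme_point_of (unit_ball N) \<and> nonneg_vec e}"
  shows "upper_monotonicity_point N x"
  unfolding upper_monotonicity_point_def
proof (intro conjI allI impI)
  show "x \<in> unit_sphere N" "nonneg_vec x" using xS xnn by auto
  define E where "E = {e. e extreme_point_of (unit_ball N) \<and> nonneg_vec e}"
  have nf: "is_norm_fun N" by (rule an_nf[OF an])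
  have Nx: "N x = 1" using xS unfolding unit_sphere_def by simp
  fix y :: "real^'n" assume y: "nonneg_vec y \<and> y \<noteq> 0"
  then obtain i where yi: "y $ i > 0"
    unfolding nonneg_vec_def by (metis less_eq_real_def vec_eq_iff zero_index)
  have "E \<noteq> {}" using xh unfolding E_def by (metis convex_hull_empty empty_iff)
  then obtain e where eE: "e \<in> E" by blast
  then have e: "e extreme_point_of unit_ball N" and enn: "nonneg_vec e" unfolding E_def by auto
  define u where "u = axis i (1::real)"
  define c where "c = N (e + u)"
  have c1: "c > 1" unfolding c_def u_def by (rule ext_UM[OF an e enn])
  define p where "p = (1 / c) *\<^sub>R (e + u)"
  have "N p = 1" unfolding p_def using nf_scale[OF nf] c1 unfolding c_def by simp
  then have pS: "p \<in> unit_sphere N" unfolding unit_sphere_def by simp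
  obtain F where F: "maximal_convex_subset F (unit_sphere N)" "p \<in> F"
    using exists_maximal[OF pS] by blast
  have cF: "convex F" and FS: "F \<subseteq> unit_sphere N" using F(1) unfolding maximal_convex_subset_def by auto
  obtain w where wle: "\<forall>z. inner w z \<le> N z" and w1: "\<forall>z\<in>F. inner w z = 1"
    using separation[OF an cF FS] F(2) by blast
  have "inner w p = 1" using w1 F(2) by blast
  moreover have "inner w p = (1/c) * inner w (e + u)" unfolding p_def by (rule inner_scaleR_right)
  ultimately have wc: "inner w (e + u) = c" using c1 by (simp add: field_simps)
  have wu: "inner w u \<le> 1" using wle an_axis[OF an, of i] unfolding u_def by metis
  have "e \<noteq> 0" using e zero_not_ext[OF an] by metis
  then have "e \<in> F \<or> - e \<in> F" using ext_in_F[OF CL F(1) e] by blast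
  then have "inner w e = 1 \<or> inner w e = -1" using w1 by (metis inner_minus_right minus_equation_iff)
  moreover have "inner w e + inner w u = c" using wc by (simp add: inner_add_right)
  ultimately have "inner w e = 1" using wu c1 by linarith
  then have wi: "w $ i > 0" using wc c1 unfolding u_def by (simp add: inner_add_right inner_axis)
  define s where "s = (\<chi> j. if w $ j \<ge> 0 then (1::real) else -1)"
  have s: "\<forall>j. \<bar>s $ j\<bar> = 1" unfolding s_def by simp
  define g where "g = (\<chi> j. \<bar>w $ j\<bar>)"
  have gw: "inner g z = inner w (sflip s z)" for z
    unfolding g_def s_def inner_vec_def by (rule sum.cong) (auto simp: abs_if)
  have gle: "inner g z \<le> N z" for z using gw wle an_sflip[OF an s] by metis
  have Gm: "maximal_convex_subset (sflip s ` F) (unit_sphere N)" by (rule maximal_sflip[OF an s F(1)])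
  have g1: "inner g z = 1" if zF: "z \<in> sflip s ` F" for z
  proof -
    obtain z' where "z' \<in> F" "z = sflip s z'" using zF by blast
    then show ?thesis using gw w1 sflip_invol[OF s] by simp
  qed
  have gnn: "inner g z \<ge> 0" if "nonneg_vec z" for z
    using that unfolding g_def inner_vec_def nonneg_vec_def by (auto intro: sum_nonneg)
  have "E \<subseteq> {z. inner g z = 1}"
  proof
    fix e' assume "e' \<in> E"
    then have e': "e' extreme_point_of unit_ball N" "nonneg_vec e'" unfolding E_def by auto
    have "e' \<noteq> 0" using e' zero_not_ext[OF an] by metis
    then have "e' \<in> sflip s ` F \<or> - e' \<in> sflip s ` F" using ext_in_F[OF CL Gm e'(1)] by blast
    then have "inner g e' = 1 \<or> inner g e' = -1" using g1 by (metis inner_minus_right minus_equation_iff)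
    then show "e' \<in> {z. inner g z = 1}" using gnn[OF e'(2)] by auto
  qed
  then have "convex hull E \<subseteq> {z. inner g z = 1}" by (metis hull_minimal convex_hyperplane)
  then have gx: "inner g x = 1" using xh unfolding E_def by auto
  have gy: "inner g y = (\<Sum>j\<in>UNIV. \<bar>w $ j\<bar> * y $ j)" unfolding g_def inner_vec_def by simp
  have "\<bar>w $ i\<bar> * y $ i \<le> (\<Sum>j\<in>UNIV. \<bar>w $ j\<bar> * y $ j)"
    using y unfolding nonneg_vec_def by (intro member_le_sum) auto
  moreover have "\<bar>w $ i\<bar> * y $ i > 0" using wi yi by simp
  ultimately have "inner g y > 0" unfolding gy by linarith
  then have "inner g (x + y) > 1" using gx by (simp add: inner_add_right)
  then show "N (x + y) > N x" using gle[of "x + y"] Nx by simp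
qed

theorem corollary5p4:
  fixes N :: "real^'n \<Rightarrow> real" and a :: "real^'n"
  assumes "absolute_norm N"
    and "CL_space N"
    and "(\<chi> i. \<bar>a $ i\<bar>) \<in> unit_sphere N"
  shows "upper_monotonicity_point N (\<chi> i. \<bar>a $ i\<bar>) \<longleftrightarrow>
         (\<chi> i. \<bar>a $ i\<bar>) \<in> convex hull
            {e. e extreme_point_of (unit_ball N) \<and> nonneg_vec e}"
proof
  assume "upper_monotonicity_point N (\<chi> i. \<bar>a $ i\<bar>)"
  then show "(\<chi> i. \<bar>a $ i\<bar>) \<in> convex hull {e. e extreme_point_of (unit_ball N) \<and> nonneg_vec e}"
    by (rule dir_left[OF assms(1)])
next
  assume "(\<chi> i. \<bar>a $ i\<bar>) \<in> convex hull {e. e extreme_point_of (unit_ball N) \<and> nonneg_vec e}"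
  moreover have "nonneg_vec (\<chi> i. \<bar>a $ i\<bar>)" unfolding nonneg_vec_def by simp
  ultimately show "upper_monotonicity_point N (\<chi> i. \<bar>a $ i\<bar>)"
    using dir_right[OF assms(1,2,3)] by blast
qed


end
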